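(* Let $d\ge 2$ and let $\psi_d:\mathcal{C}_{d-2}\times\mathbb{R}_{\ge0}\to\mathcal{B}_d$, $\psi_d(f,t)(x)=f(x)(x-t)^2$. Then $\psi_d$ is almost injective in the following sense: identifying $F_{d-2}$ with $\mathbb{R}^{d-2}$ via the non-leading coefficients, the set $\mathcal{B}_{d-2}$ has Lebesgue measure zero, and the restriction of $\psi_d$ to $(\mathcal{C}_{d-2}\setminus\mathcal{B}_{d-2})\times\mathbb{R}_{\ge0}$ is injective. (Here $\mathcal{B}_0=\emptyset$.)
   Context: A polynomial $f\in\mathbb{R}[x]$ is copositive if $f(x)\ge0$ for all real $x\ge0$. $F_d$ is the set of monic real polynomials of degree exactly $d$; $\mathcal{C}_d=\{f\in F_d: f\text{ copositive}\}$. The base boundary is $\mathcal{B}_d=\{f\in\mathcal{C}_d:\ \exists\,x\ge 0 \text{ with } f(x)=f'(x)=0\}$. *)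

theory Defs
  imports "HOL-Analysis.Analysis" "HOL-Computational_Algebra.Polynomial"
begin

definition monicF :: "nat \<Rightarrow> real poly set" where
  "monicF d = {f. degree f = d \<and> lead_coeff f = 1}"

definition copositive :: "real poly \<Rightarrow> bool" where
  "copositive f \<longleftrightarrow> (\<forall>x::real. x \<ge> 0 \<longrightarrow> poly f x \<ge> 0)"

definition copC :: "nat \<Rightarrow> real poly set" where
  "copC d = {f \<in> monicF d. copositive f}"

definition baseB :: "nat \<Rightarrow> real poly set" where
  "baseB d = {f \<in> copC d. \<exists>x::real. x \<ge> 0 \<and> poly f x = 0 \<and> poly (pderiv f) x = 0}"

definition psi :: "real poly \<Rightarrow> real \<Rightarrow> real poly" where
  "psi f t = f * [:-t, 1:] ^ 2"

definition monic_of_coeffs :: "nat \<Rightarrow> (nat \<Rightarrow> real) \<Rightarrow> real poly" where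
  "monic_of_coeffs n c = monom 1 n + (\<Sum>i<n. monom (c i) i)"

end

theory Submission
  imports Defs "HOL-Computational_Algebra.Fundamental_Theorem_Algebra"
begin


lemma poly_moc: "poly (monic_of_coeffs n c) x = x^n + (\<Sum>i<n. c i * x^i)"
  by (simp add: monic_of_coeffs_def poly_sum poly_monom)

lemma pderiv_sum': "pderiv (\<Sum>i\<in>A. p i) = (\<Sum>i\<in>A. pderiv (p i))"
  by (induct A rule: infinite_finite_induct) (auto simp: pderiv_add)

lemma poly_pderiv_moc: "poly (pderiv (monic_of_coeffs n c)) x
   = of_nat n * x^(n-1) + (\<Sum>i<n. of_nat i * c i * x^(i-1))"
  by (simp add: monic_of_coeffs_def poly_sum poly_monom pderiv_add pderiv_sum' pderiv_monom)

lemma coeff_moc: "coeff (monic_of_coeffs n c) k = (if k = n then 1 else if k < n then c k else 0)"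
  by (auto simp: monic_of_coeffs_def coeff_sum coeff_monom)

lemma moc_monic: "monic_of_coeffs n c \<in> monicF n"
proof -
  have "degree (monic_of_coeffs n c) = n"
  proof (rule antisym)
    show "degree (monic_of_coeffs n c) \<le> n"
      by (rule degree_le) (auto simp: coeff_moc)
    show "n \<le> degree (monic_of_coeffs n c)"
      by (rule le_degree) (simp add: coeff_moc)
  qed
  then show ?thesis by (simp add: monicF_def coeff_moc)
qed

lemma rat_approx:
  fixes g :: "real \<Rightarrow> real"
  assumes "isCont g x" "x \<ge> 0" "g x < e"
  shows "\<exists>q::rat. of_rat q \<ge> (0::real) \<and> g (of_rat q) < e"
proof -
  obtain d where d: "d > 0" "\<And>y. dist y x < d \<Longrightarrow> dist (g y) (g x) < e - g x"
    using assms(1)[unfolded continuous_at_eps_delta] assms(3) by (meson diff_gt_0_iff_gt)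
  obtain r where r: "r \<in> \<rat>" "x < r" "r < x + d"
    using Rats_dense_in_real[of x "x+d"] d(1) by auto
  then obtain q where q: "r = of_rat q" by (auto elim: Rats_cases)
  have "dist r x < d" using r by (simp add: dist_real_def)
  then have "g r < e" using d(2)[of r] by (simp add: dist_real_def abs_less_iff)
  moreover have "0 \<le> real_of_rat q" using q r assms(2) by linarith
  ultimately show ?thesis
  proof (intro exI conjI)
    show "g (real_of_rat q) < e" using \<open>g r < e\<close> q by simp
  qed
qed

lemma poly_big:
  fixes f :: "real poly"
  assumes "degree f \<ge> 1"
  shows "\<exists>r. \<forall>z. r \<le> \<bar>z\<bar> \<longrightarrow> 1 \<le> \<bar>poly f z\<bar>"
proof -
  obtain a p where f: "f = pCons a p" by (cases f)
  with assms have "p \<noteq> 0" by auto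
  from poly_infinity[OF this, of 1 a] show ?thesis unfolding f by simp
qed

definition G :: "real poly \<Rightarrow> real \<Rightarrow> real" where
  "G f x = (poly f x)^2 + (poly (pderiv f) x)^2"

lemma G_cont: "isCont (G f) x"
  unfolding G_def by (intro continuous_intros)

lemma key:
  fixes f :: "real poly"
  assumes "degree f \<ge> 1"
  shows "(copositive f \<and> (\<exists>x::real. x \<ge> 0 \<and> poly f x = 0 \<and> poly (pderiv f) x = 0))
     \<longleftrightarrow> ((\<forall>q::rat. 0 \<le> real_of_rat q \<longrightarrow> 0 \<le> poly f (of_rat q)) \<and>
          (\<forall>k::nat. \<exists>q::rat. 0 \<le> real_of_rat q \<and> G f (of_rat q) < 1 / real (Suc k)))"
proof
  assume A: "copositive f \<and> (\<exists>x::real. x \<ge> 0 \<and> poly f x = 0 \<and> poly (pderiv f) x = 0)"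
  then obtain x where x: "x \<ge> 0" "G f x = 0" by (auto simp: G_def)
  show "(\<forall>q::rat. 0 \<le> real_of_rat q \<longrightarrow> 0 \<le> poly f (of_rat q)) \<and>
          (\<forall>k::nat. \<exists>q::rat. 0 \<le> real_of_rat q \<and> G f (of_rat q) < 1 / real (Suc k))"
  proof
    show "\<forall>q::rat. 0 \<le> real_of_rat q \<longrightarrow> 0 \<le> poly f (of_rat q)"
      using A by (auto simp: copositive_def)
    show "\<forall>k::nat. \<exists>q::rat. 0 \<le> real_of_rat q \<and> G f (of_rat q) < 1 / real (Suc k)"
    proof
      fix k :: nat
      show "\<exists>q::rat. 0 \<le> real_of_rat q \<and> G f (of_rat q) < 1 / real (Suc k)"
        by (rule rat_approx[OF G_cont x(1)]) (simp add: x(2))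
    qed
  qed
next
  assume B: "(\<forall>q::rat. 0 \<le> real_of_rat q \<longrightarrow> 0 \<le> poly f (of_rat q)) \<and>
          (\<forall>k::nat. \<exists>q::rat. 0 \<le> real_of_rat q \<and> G f (of_rat q) < 1 / real (Suc k))"
  have cop: "copositive f"
    unfolding copositive_def
  proof (intro allI impI, rule ccontr)
    fix x :: real assume x: "x \<ge> 0" "\<not> 0 \<le> poly f x"
    then obtain q :: rat where "0 \<le> real_of_rat q" "poly f (of_rat q) < 0"
      using rat_approx[where g="poly f" and x=x and e=0] by auto
    with B have "0 \<le> poly f (of_rat q)" by blast
    then show False using \<open>poly f (of_rat q) < 0\<close> by linarith
  qed
  from B have "\<forall>k. \<exists>q::rat. 0 \<le> real_of_rat q \<and> G f (of_rat q) < 1 / real (Suc k)" by blast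
  from choice[OF this] obtain q :: "nat \<Rightarrow> rat" where q0: "\<forall>k. 0 \<le> real_of_rat (q k) \<and> G f (of_rat (q k)) < 1 / real (Suc k)"
    by (elim exE)
  have q: "\<And>k. 0 \<le> real_of_rat (q k)" "\<And>k. G f (of_rat (q k)) < 1 / real (Suc k)"
    using q0 by auto
  obtain R where R: "\<And>z. R \<le> \<bar>z\<bar> \<Longrightarrow> 1 \<le> \<bar>poly f z\<bar>"
    using poly_big[OF assms] by blast
  define s where "s k = real_of_rat (q k)" for k
  have sR: "s k \<in> {0..R}" for k
  proof -
    have "1 / real (Suc k) \<le> 1" by simp
    then have "G f (s k) < 1" using q(2)[of k] unfolding s_def by linarith
    moreover have "0 \<le> (poly (pderiv f) (s k))^2" by simp
    ultimately have "(poly f (s k))^2 < 1" unfolding G_def by linarith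
    then have "\<bar>poly f (s k)\<bar> < 1" by (simp add: abs_square_less_1)
    then have "\<bar>s k\<bar> < R" using R[of "s k"] by linarith
    then show ?thesis using q(1)[of k] unfolding s_def by auto
  qed
  have sc: "seq_compact {0..R}" by (rule compact_imp_seq_compact) simp
  obtain l r where lr: "l \<in> {0..R}" "strict_mono (r :: nat \<Rightarrow> nat)" "(s \<circ> r) \<longlonglongrightarrow> l"
    by (rule seq_compactE[OF sc allI[OF sR]])
  have lim1: "(\<lambda>k. G f (s (r k))) \<longlonglongrightarrow> G f l"
    using isCont_tendsto_compose[OF G_cont lr(3)[unfolded o_def]] .
  have l0: "(\<lambda>k. 1 / real (Suc k)) \<longlonglongrightarrow> 0"
    using LIMSEQ_Suc[OF lim_1_over_n] by simp
  have lim0: "(\<lambda>k. 1 / real (Suc (r k))) \<longlonglongrightarrow> 0"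
    using LIMSEQ_subseq_LIMSEQ[OF l0 lr(2)] by (simp add: o_def)
  have "G f l \<le> 0"
  proof (rule tendsto_le[OF _ lim0 lim1])
    show "\<forall>\<^sub>F k in sequentially. G f (s (r k)) \<le> 1 / real (Suc (r k))"
      using q(2) unfolding s_def by (simp add: less_imp_le)
  qed simp
  moreover have "0 \<le> (poly (pderiv f) l)^2" "0 \<le> (poly f l)^2" by simp_all
  ultimately have "(poly (pderiv f) l)^2 = 0" "(poly f l)^2 = 0" unfolding G_def by linarith+
  then have "poly f l = 0 \<and> poly (pderiv f) l = 0" by simp
  with lr(1) cop show "copositive f \<and> (\<exists>x::real. x \<ge> 0 \<and> poly f x = 0 \<and> poly (pderiv f) x = 0)"
    by auto
qed



lemma dbl_root: "poly (h * [:-s,1:]^2) s = 0 \<and> poly (pderiv (h * [:-s,1:]^2)) s = (0::real)"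
proof -
  have q0: "poly [:-s,1:] s = 0" by simp
  show ?thesis
    by (simp only: power2_eq_square pderiv_mult poly_add poly_mult q0 mult_zero_left mult_zero_right add_0)
qed

lemma part1:
  assumes "f \<in> copC n" "t \<ge> 0"
  shows "psi f t \<in> baseB (n+2)"
proof -
  have f: "degree f = n" "lead_coeff f = 1" "copositive f"
    using assms(1) by (auto simp: copC_def monicF_def)
  then have "f \<noteq> 0" by auto
  have "degree (psi f t) = n + 2"
    using f \<open>f \<noteq> 0\<close> by (simp add: psi_def degree_mult_eq degree_linear_power)
  moreover have "lead_coeff (psi f t) = lead_coeff f * lead_coeff ([:-t,1:]^2)"
    by (simp only: psi_def lead_coeff_mult)
  then have "lead_coeff (psi f t) = 1" using f(2) by (simp add: lead_coeff_power)
  moreover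
  moreover have "copositive (psi f t)"
    using f(3) by (auto simp: copositive_def psi_def)
  ultimately show ?thesis using assms(2) dbl_root[of f t] \<open>degree (psi f t) = n + 2\<close>
    by (auto simp: baseB_def copC_def monicF_def psi_def)
qed

lemma part3core:
  assumes f: "f \<in> copC n" "f \<notin> baseB n" and t: "t \<ge> (0::real)"
     and g: "g \<in> copC n" "g \<notin> baseB n" and s: "s \<ge> (0::real)"
     and eq: "psi f t = psi g s"
  shows "f = g \<and> t = s"
proof -
  have nz: "f \<noteq> 0" "g \<noteq> 0" using f g by (auto simp: copC_def monicF_def)
  have ts: "t = s"
  proof (rule ccontr)
    assume "t \<noteq> s"
    have o1: "order s ([:-t,1:]^2) = 0"
      by (rule order_0I) (use \<open>t \<noteq> s\<close> in simp)
    have "order s (f * [:-t,1:]^2) = order s f"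
      using nz by (simp add: order_mult o1)
    moreover have "order s (g * [:-s,1:]^2) = order s g + 2"
      using nz by (simp add: order_mult order_power_n_n)
    ultimately have "2 \<le> order s f" using eq by (simp add: psi_def)
    then have "[:-s,1:]^2 dvd f" using order_divides by blast
    then obtain h where h: "f = [:-s,1:]^2 * h" by (elim dvdE)
    then have "poly f s = 0 \<and> poly (pderiv f) s = 0"
      using dbl_root[of h s] by (simp only: mult.commute)
    then have "f \<in> baseB n" using f(1) s by (auto simp: baseB_def)
    with f(2) show False by simp
  qed
  from eq have "f * [:-s,1:]^2 = g * [:-s,1:]^2" by (simp add: psi_def ts)
  then have "f = g" by simp
  then show "f = g \<and> t = s" using ts by simp
qed

lemma part3:
  "inj_on (\<lambda>(f, t). psi f t) ((copC n - baseB n) \<times> {0::real..})"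
proof (rule inj_onI)
  fix x y assume x: "x \<in> (copC n - baseB n) \<times> {0::real..}" and y: "y \<in> (copC n - baseB n) \<times> {0::real..}"
    and e: "(\<lambda>(f, t). psi f t) x = (\<lambda>(f, t). psi f t) y"
  obtain f t where xf: "x = (f, t)" by (cases x)
  obtain g s where yg: "y = (g, s)" by (cases y)
  show "x = y" using part3core[of f n t g s] x y e unfolding xf yg by auto
qed

lemma B0_empty: "baseB 0 = {}"
  by (auto simp: baseB_def copC_def monicF_def elim!: degree_eq_zeroE)



lemma meas_poly[measurable]:
  "(\<lambda>c. poly (monic_of_coeffs n c) x) \<in> borel_measurable (Pi\<^sub>M {..<n} (\<lambda>_. lborel))"
  unfolding poly_moc by measurable

lemma meas_dpoly[measurable]:
  "(\<lambda>c. poly (pderiv (monic_of_coeffs n c)) x) \<in> borel_measurable (Pi\<^sub>M {..<n} (\<lambda>_. lborel))"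
  unfolding poly_pderiv_moc by measurable

lemma meas_G[measurable]:
  "(\<lambda>c. G (monic_of_coeffs n c) x) \<in> borel_measurable (Pi\<^sub>M {..<n} (\<lambda>_. lborel))"
  unfolding G_def by measurable

lemma S_char:
  assumes "n \<ge> 1"
  shows "{c \<in> PiE {..<n} (\<lambda>_. UNIV). monic_of_coeffs n c \<in> baseB n}
     = {c \<in> space (Pi\<^sub>M {..<n} (\<lambda>_. lborel)).
         (\<forall>q::rat. 0 \<le> real_of_rat q \<longrightarrow> 0 \<le> poly (monic_of_coeffs n c) (of_rat q)) \<and>
          (\<forall>k::nat. \<exists>q::rat. 0 \<le> real_of_rat q \<and> G (monic_of_coeffs n c) (of_rat q) < 1 / real (Suc k))}"
proof -
  have "monic_of_coeffs n c \<in> baseB n \<longleftrightarrow>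
        ((\<forall>q::rat. 0 \<le> real_of_rat q \<longrightarrow> 0 \<le> poly (monic_of_coeffs n c) (of_rat q)) \<and>
          (\<forall>k::nat. \<exists>q::rat. 0 \<le> real_of_rat q \<and> G (monic_of_coeffs n c) (of_rat q) < 1 / real (Suc k)))"
    for c
  proof -
    have m: "monic_of_coeffs n c \<in> monicF n" by (rule moc_monic)
    then have "degree (monic_of_coeffs n c) \<ge> 1" using assms by (simp add: monicF_def)
    from key[OF this] m show ?thesis by (simp add: baseB_def copC_def)
  qed
  then show ?thesis by (simp add: space_PiM)
qed

lemma S_sets:
  "{c \<in> PiE {..<n} (\<lambda>_. UNIV). monic_of_coeffs n c \<in> baseB n} \<in> sets (Pi\<^sub>M {..<n} (\<lambda>_. lborel))"
proof (cases "n = 0")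
  case True
  then show ?thesis by (simp add: B0_empty)
next
  case False
  then have "n \<ge> 1" by simp
  show ?thesis by (subst S_char[OF \<open>n \<ge> 1\<close>]) measurable
qed

lemma moc_shift:
  assumes "n \<ge> 1"
  shows "poly (monic_of_coeffs n (c(0:=a))) z = poly (monic_of_coeffs n (c(0:=b))) z + (a - b)"
proof -
  have "(\<Sum>i<n. (c(0:=a)) i * z^i) = a + (\<Sum>i\<in>{..<n}-{0}. c i * z^i)"
    using assms by (simp add: sum.remove[of "{..<n}" 0])
  moreover have "(\<Sum>i<n. (c(0:=b)) i * z^i) = b + (\<Sum>i\<in>{..<n}-{0}. c i * z^i)"
    using assms by (simp add: sum.remove[of "{..<n}" 0])
  ultimately show ?thesis by (simp add: poly_moc)
qed

lemma fiber_unique: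
  assumes "n \<ge> 1" "monic_of_coeffs n (c(0:=a)) \<in> baseB n" "monic_of_coeffs n (c(0:=b)) \<in> baseB n"
  shows "a = b"
proof -
  obtain x where x: "x \<ge> 0" "poly (monic_of_coeffs n (c(0:=a))) x = 0"
    using assms(2) by (auto simp: baseB_def)
  obtain y where y: "y \<ge> 0" "poly (monic_of_coeffs n (c(0:=b))) y = 0"
    using assms(3) by (auto simp: baseB_def)
  have ca: "copositive (monic_of_coeffs n (c(0:=a)))" and cb: "copositive (monic_of_coeffs n (c(0:=b)))"
    using assms(2,3) by (auto simp: baseB_def copC_def)
  have "0 \<le> poly (monic_of_coeffs n (c(0:=a))) y" using ca y(1) by (simp add: copositive_def)
  then have "b \<le> a" using moc_shift[OF assms(1), where c=c and a=a and b=b and z=y] y(2) by linarith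
  have "0 \<le> poly (monic_of_coeffs n (c(0:=b))) x" using cb x(1) by (simp add: copositive_def)
  then have "a \<le> b" using moc_shift[OF assms(1), where c=c and a=b and b=a and z=x] x(2) by linarith
  with \<open>b \<le> a\<close> show ?thesis by simp
qed

lemma part2:
  "{c \<in> PiE {..<n} (\<lambda>_. UNIV). monic_of_coeffs n c \<in> baseB n} \<in> null_sets (Pi\<^sub>M {..<n} (\<lambda>_. lborel))"
proof (cases "n = 0")
  case True
  then show ?thesis by (simp add: B0_empty)
next
  case False
  then have n1: "n \<ge> 1" by simp
  define S where "S = {c \<in> PiE {..<n} (\<lambda>_. UNIV). monic_of_coeffs n c \<in> baseB n}"
  have Ssets: "S \<in> sets (Pi\<^sub>M {..<n} (\<lambda>_. lborel))" unfolding S_def by (rule S_sets)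
  interpret product_sigma_finite "\<lambda>_. lborel" by standard
  have ins: "{..<n} = insert 0 {1..<n}" using n1 by auto
  have inner: "(\<integral>\<^sup>+ y. indicator S (x(0 := y)) \<partial>lborel) = 0" for x :: "nat \<Rightarrow> real"
  proof -
    define A where "A = {y. x(0 := y) \<in> S}"
    have "subsingleton": "\<And>a b. a \<in> A \<Longrightarrow> b \<in> A \<Longrightarrow> a = b"
      unfolding A_def S_def using fiber_unique[OF n1] by auto
    have "finite A"
    proof (cases "A = {}")
      case False
      then obtain a where "a \<in> A" by auto
      then have "A = {a}" using subsingleton by auto
      then show ?thesis by simp
    qed simp
    then have An: "A \<in> null_sets lborel" by (rule finite_imp_null_set_lborel)
    have "(\<integral>\<^sup>+ y. indicator S (x(0 := y)) \<partial>lborel) = (\<integral>\<^sup>+ y. indicator A y \<partial>lborel)"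
      by (rule nn_integral_cong) (simp add: A_def indicator_def)
    also have "\<dots> = emeasure lborel A" by (rule nn_integral_indicator[OF null_setsD2[OF An]])
    also have "\<dots> = 0" using An by (rule null_setsD1)
    finally show ?thesis .
  qed
  have "emeasure (Pi\<^sub>M {..<n} (\<lambda>_. lborel)) S = (\<integral>\<^sup>+ c. indicator S c \<partial>(Pi\<^sub>M {..<n} (\<lambda>_. lborel)))"
    using Ssets by simp
  also have "\<dots> = (\<integral>\<^sup>+ x. (\<integral>\<^sup>+ y. indicator S (x(0 := y)) \<partial>lborel) \<partial>(Pi\<^sub>M {1..<n} (\<lambda>_. lborel)))"
    unfolding ins by (rule product_nn_integral_insert) (use Ssets ins in auto)
  also have "\<dots> = 0" by (simp add: inner)
  finally show ?thesis using Ssets unfolding S_def by (simp add: null_sets_def)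
qed


theorem mainTheorem3:
  fixes d :: nat
  assumes "d \<ge> 2"
  shows "(\<forall>f \<in> copC (d - 2). \<forall>t::real. t \<ge> 0 \<longrightarrow> psi f t \<in> baseB d)
    \<and> {c \<in> PiE {..<d - 2} (\<lambda>_. UNIV). monic_of_coeffs (d - 2) c \<in> baseB (d - 2)}
        \<in> null_sets (Pi\<^sub>M {..<d - 2} (\<lambda>_. lborel))
    \<and> inj_on (\<lambda>(f, t). psi f t) ((copC (d - 2) - baseB (d - 2)) \<times> {0::real..})"
proof (intro conjI)
  have dd: "d - 2 + 2 = d" using assms by simp
  show "\<forall>f \<in> copC (d - 2). \<forall>t::real. t \<ge> 0 \<longrightarrow> psi f t \<in> baseB d"
    using part1[of _ "d - 2"] unfolding dd by blast
  show "{c \<in> PiE {..<d - 2} (\<lambda>_. UNIV). monic_of_coeffs (d - 2) c \<in> baseB (d - 2)}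
        \<in> null_sets (Pi\<^sub>M {..<d - 2} (\<lambda>_. lborel))" by (rule part2)
  show "inj_on (\<lambda>(f, t). psi f t) ((copC (d - 2) - baseB (d - 2)) \<times> {0::real..})" by (rule part3)
qed

end
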